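(* Let $(G',\sigma,G)$ be a left (resp. right) valid triplet, where $\sigma:\mathcal{A}^*\to\mathcal{B}^*$ is a return morphism. For every spanning tree $T'$ of $G'$, there exists a spanning tree $T$ of $G$ such that $(T',\sigma,T)$ is left (resp. right) valid, where spanning trees are regarded as colored trees (each edge having its own color).
   Context: A return morphism for $w\in\mathcal{B}^+$ is an injective non-erasing morphism $\sigma:\mathcal{A}^*\to\mathcal{B}^*$ such that $\sigma(a)w$ contains exactly two occurrences of $w$, a proper prefix and a proper suffix, for each $a\in\mathcal{A}$ ($w$ of maximal length if unspecified). $\mathcal{A}^L_{\sigma,s}=\{a:\sigma(a)\in\mathcal{B}^+s\}$, $\mathcal{A}^R_{\sigma,p}=\{a:\sigma(a)w\in p\mathcal{B}^+\}$; $\varphi^L_{\sigma,s}(a)$ for $a\in\mathcal{A}^L_{\sigma,s}$ is the letter $a'$ with $\sigma(a)\in\mathcal{B}^*a's$; $\varphi^R_{\sigma,p}(b)$ for $b\in\mathcal{A}^R_{\sigma,p}$ is the letter $b'$ with $\sigma(b)w\in pb'\mathcal{B}^*$; $\mathcal{T}^L(\sigma)$ is the set of longest common suffixes of $\sigma(a),\sigma(b)$, $a\ne b$, and $\mathcal{T}^R(\sigma)$ the set of longest common prefixes of $\sigma(a)w,\sigma(b)w$, $a\ne b$. Multi-clique $G(\{C_1,\dots,C_k\})$ on a vertex set $V$: every pair of distinct elements of $C_i$ joined by an edge of color $c_i$, colors distinct; colored multigraphs identified up to a bijection of colors. Acyclic for the coloring: each simple cycle is monochromatic. A colored tree is a multi-clique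 all of whose edges have different colors and whose underlying graph is a tree. For a multigraph $G$ on $\mathcal{A}$, $G^L_{\sigma,s}$ (resp. $G^R_{\sigma,p}$) is its subgraph induced by $\mathcal{A}^L_{\sigma,s}$ (resp. $\mathcal{A}^R_{\sigma,p}$). For $G=G(\{C_1,\dots,C_k\})$ on $\mathcal{A}$: $\sigma^L(G)=G(\{\varphi^L_{\sigma,s}(C_i):i\le k,s\in\mathcal{T}^L(\sigma)\})$, $\sigma^R(G)=G(\{\varphi^R_{\sigma,p}(C_i):i\le k,p\in\mathcal{T}^R(\sigma)\})$ on vertex set $\mathcal{B}$. A triplet $(G',\sigma,G)$ is left valid (resp. right valid) if (1) $G$ is a multi-clique acyclic for the coloring and connected; (2) for all $s\in\mathcal{T}^L(\sigma)$, $G^L_{\sigma,s}$ is connected (resp. for all $p\in\mathcal{T}^R(\sigma)$, $G^R_{\sigma,p}$ is connected); (3) $G'=\sigma^L(G)$ (resp. $G'=\sigma^R(G)$) is a multi-clique acyclic for the coloring and connected. *)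

theory Defs
  imports Main "HOL-Library.Multiset" "HOL-Library.Sublist"
begin

definition morph :: "('a \<Rightarrow> 'b list) \<Rightarrow> 'a list \<Rightarrow> 'b list" where
  "morph \<sigma> u = concat (map \<sigma> u)"

definition occurrences :: "'b list \<Rightarrow> 'b list \<Rightarrow> nat set" where
  "occurrences u w = {i. \<exists>p s. u = p @ w @ s \<and> length p = i}"

definition return_morphism ::
  "'a set \<Rightarrow> 'b set \<Rightarrow> ('a \<Rightarrow> 'b list) \<Rightarrow> 'b list \<Rightarrow> bool" where
  "return_morphism A B \<sigma> w \<longleftrightarrow>
     w \<noteq> [] \<and> set w \<subseteq> B \<and>
     (\<forall>a\<in>A. set (\<sigma> a) \<subseteq> B) \<and>
     (\<forall>a\<in>A. \<sigma> a \<noteq> []) \<and>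
     inj_on (morph \<sigma>) (lists A) \<and>
     (\<forall>a\<in>A. occurrences (\<sigma> a @ w) w = {0, length (\<sigma> a)})"

definition longest_common_suffix :: "'b list \<Rightarrow> 'b list \<Rightarrow> 'b list" where
  "longest_common_suffix u v = rev (longest_common_prefix (rev u) (rev v))"

definition AL :: "'a set \<Rightarrow> ('a \<Rightarrow> 'b list) \<Rightarrow> 'b list \<Rightarrow> 'a set" where
  "AL A \<sigma> s = {a\<in>A. \<exists>u. u \<noteq> [] \<and> \<sigma> a = u @ s}"

definition AR :: "'a set \<Rightarrow> ('a \<Rightarrow> 'b list) \<Rightarrow> 'b list \<Rightarrow> 'b list \<Rightarrow> 'a set" where
  "AR A \<sigma> w p = {a\<in>A. \<exists>u. u \<noteq> [] \<and> \<sigma> a @ w = p @ u}"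

(* phi^L_{sigma,s}(a): the letter a' with sigma(a) in B^* a' s *)
definition phiL :: "('a \<Rightarrow> 'b list) \<Rightarrow> 'b list \<Rightarrow> 'a \<Rightarrow> 'b" where
  "phiL \<sigma> s a = \<sigma> a ! (length (\<sigma> a) - length s - 1)"

(* phi^R_{sigma,p}(b): the letter b' with sigma(b) w in p b' B^* *)
definition phiR :: "('a \<Rightarrow> 'b list) \<Rightarrow> 'b list \<Rightarrow> 'b list \<Rightarrow> 'a \<Rightarrow> 'b" where
  "phiR \<sigma> w p b = (\<sigma> b @ w) ! length p"

definition TL :: "'a set \<Rightarrow> ('a \<Rightarrow> 'b list) \<Rightarrow> 'b list set" where
  "TL A \<sigma> = {longest_common_suffix (\<sigma> a) (\<sigma> b) | a b. a \<in> A \<and> b \<in> A \<and> a \<noteq> b}"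

definition TR :: "'a set \<Rightarrow> ('a \<Rightarrow> 'b list) \<Rightarrow> 'b list \<Rightarrow> 'b list set" where
  "TR A \<sigma> w = {longest_common_prefix (\<sigma> a @ w) (\<sigma> b @ w) | a b. a \<in> A \<and> b \<in> A \<and> a \<noteq> b}"

(* A multi-clique G({C_1,...,C_k}) is represented by the multiset {#C_1,...,C_k#};
   each element occurrence is one colour (colours are distinct), and the multiset
   representation identifies colourings up to a bijection of colours. *)

definition multi_clique_on :: "'v set \<Rightarrow> 'v set multiset \<Rightarrow> bool" where
  "multi_clique_on V G \<longleftrightarrow> (\<forall>C\<in>#G. C \<subseteq> V)"

(* equality of the coloured multigraphs: cliques with fewer than two vertices carry no edge *)
definition mc_eq :: "'v set multiset \<Rightarrow> 'v set multiset \<Rightarrow> bool" where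
  "mc_eq G H \<longleftrightarrow> filter_mset (\<lambda>C. 2 \<le> card C) G = filter_mset (\<lambda>C. 2 \<le> card C) H"

(* with colours = list indices: every simple cycle v_0 ... v_{n-1} (n >= 2, distinct vertices,
   distinct edges, the edge between v_i and v_{i+1 mod n} having colour c i) is monochromatic *)
definition acyclic_list :: "'v set list \<Rightarrow> bool" where
  "acyclic_list xs \<longleftrightarrow>
    (\<forall>(n::nat) (v::nat \<Rightarrow> 'v) (c::nat \<Rightarrow> nat).
       2 \<le> n \<and> inj_on v {..<n} \<and>
       (\<forall>i<n. c i < length xs \<and> v i \<in> xs ! c i \<and> v (Suc i mod n) \<in> xs ! c i) \<and>
       (n = 2 \<longrightarrow> c 0 \<noteq> c 1)
       \<longrightarrow> (\<forall>i<n. c i = c 0))"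

definition acyclic_coloring :: "'v set multiset \<Rightarrow> bool" where
  "acyclic_coloring G \<longleftrightarrow> (\<forall>xs. mset xs = G \<longrightarrow> acyclic_list xs)"

definition mc_connected :: "'v set \<Rightarrow> 'v set multiset \<Rightarrow> bool" where
  "mc_connected V G \<longleftrightarrow>
    (\<forall>u\<in>V. \<forall>v\<in>V. (u, v) \<in> {(x, y). x \<in> V \<and> y \<in> V \<and> (\<exists>C\<in>#G. x \<in> C \<and> y \<in> C)}\<^sup>*)"

definition induced :: "'v set \<Rightarrow> 'v set multiset \<Rightarrow> 'v set multiset" where
  "induced X G = image_mset (\<lambda>C. C \<inter> X) G"

definition colored_tree :: "'v set \<Rightarrow> 'v set multiset \<Rightarrow> bool" where
  "colored_tree V T \<longleftrightarrow>
     (\<forall>C\<in>#T. C \<subseteq> V \<and> card C = 2) \<and> (\<forall>C. count T C \<le> 1) \<and>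
     mc_connected V T \<and> acyclic_coloring T"

definition spanning_tree :: "'v set \<Rightarrow> 'v set multiset \<Rightarrow> 'v set multiset \<Rightarrow> bool" where
  "spanning_tree V G T \<longleftrightarrow> colored_tree V T \<and> (\<forall>e\<in>#T. \<exists>C\<in>#G. e \<subseteq> C)"

definition sigmaL :: "'a set \<Rightarrow> ('a \<Rightarrow> 'b list) \<Rightarrow> 'a set multiset \<Rightarrow> 'b set multiset" where
  "sigmaL A \<sigma> G = (\<Sum>C\<in>#G. image_mset (\<lambda>s. phiL \<sigma> s ` (C \<inter> AL A \<sigma> s)) (mset_set (TL A \<sigma>)))"

definition sigmaR ::
  "'a set \<Rightarrow> ('a \<Rightarrow> 'b list) \<Rightarrow> 'b list \<Rightarrow> 'a set multiset \<Rightarrow> 'b set multiset" where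
  "sigmaR A \<sigma> w G = (\<Sum>C\<in>#G. image_mset (\<lambda>p. phiR \<sigma> w p ` (C \<inter> AR A \<sigma> w p)) (mset_set (TR A \<sigma> w)))"

definition left_valid ::
  "'a set \<Rightarrow> 'b set \<Rightarrow> ('a \<Rightarrow> 'b list) \<Rightarrow> 'b set multiset \<Rightarrow> 'a set multiset \<Rightarrow> bool" where
  "left_valid A B \<sigma> G' G \<longleftrightarrow>
     (multi_clique_on A G \<and> acyclic_coloring G \<and> mc_connected A G) \<and>
     (\<forall>s\<in>TL A \<sigma>. mc_connected (AL A \<sigma> s) (induced (AL A \<sigma> s) G)) \<and>
     (mc_eq G' (sigmaL A \<sigma> G) \<and> multi_clique_on B G' \<and> acyclic_coloring G' \<and> mc_connected B G')"

definition right_valid ::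
  "'a set \<Rightarrow> 'b set \<Rightarrow> ('a \<Rightarrow> 'b list) \<Rightarrow> 'b list \<Rightarrow> 'b set multiset \<Rightarrow> 'a set multiset \<Rightarrow> bool" where
  "right_valid A B \<sigma> w G' G \<longleftrightarrow>
     (multi_clique_on A G \<and> acyclic_coloring G \<and> mc_connected A G) \<and>
     (\<forall>p\<in>TR A \<sigma> w. mc_connected (AR A \<sigma> w p) (induced (AR A \<sigma> w p) G)) \<and>
     (mc_eq G' (sigmaR A \<sigma> w G) \<and> multi_clique_on B G' \<and> acyclic_coloring G' \<and> mc_connected B G')"

end

theory Submission
  imports Defs "HOL-Library.Transitive_Closure_Table"
begin


lemma path_exists:
  assumes "(u, v) \<in> R\<^sup>*"
  shows "\<exists>zs. distinct (u # zs) \<and> last (u # zs) = v \<and>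
           (\<forall>i < length zs. ((u # zs) ! i, zs ! i) \<in> R)"
proof -
  have "(\<lambda>x y. (x, y) \<in> R)\<^sup>*\<^sup>* u v" using assms by (simp add: rtrancl_def)
  then obtain xs where "rtrancl_path (\<lambda>x y. (x, y) \<in> R) u xs v"
    by (auto simp: rtranclp_eq_rtrancl_path)
  then obtain xs' where p: "rtrancl_path (\<lambda>x y. (x, y) \<in> R) u xs' v" "distinct (u # xs')"
    by (rule rtrancl_path_distinct)
  have "last (u # xs') = v"
    using p(1) by (cases xs') (auto elim: rtrancl_path.cases dest: rtrancl_path_last)
  moreover have "\<forall>i < length xs'. ((u # xs') ! i, xs' ! i) \<in> R"
    using rtrancl_path_nth[OF p(1)] by blast
  ultimately show ?thesis using p(2) by blast
qed

lemma path_rtrancl: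
  assumes "\<forall>i < length zs. ((u # zs) ! i, zs ! i) \<in> R"
  shows "(u, last (u # zs)) \<in> R\<^sup>*"
  using assms
proof (induction zs arbitrary: u)
  case Nil then show ?case by simp
next
  case (Cons z zs)
  have "(u, z) \<in> R" using Cons.prems by force
  moreover have "(z, last (z # zs)) \<in> R\<^sup>*"
  proof (rule Cons.IH, intro allI impI)
    fix i assume "i < length zs"
    then show "((z # zs) ! i, zs ! i) \<in> R"
      using Cons.prems[rule_format, of "Suc i"] by simp
  qed
  ultimately show ?case by simp
qed



lemma cycle_core:
  assumes ac: "acyclic_list xs" and d: "distinct (u#zs)" and l: "last (u#zs) = v"
    and len: "2 \<le> length zs"
    and cf: "\<forall>i<length zs. cf i < length xs \<and> (u#zs)!i \<in> xs!cf i \<and> zs!i \<in> xs!cf i"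
    and k: "k < length xs" "u \<in> xs!k" "v \<in> xs!k"
  shows "\<forall>i<length zs. cf i = k"
proof -
  define n where "n = Suc (length zs)"
  define vv where "vv = (\<lambda>i. (u#zs)!i)"
  define c where "c = (\<lambda>i. if i < length zs then cf i else k)"
  have inj: "inj_on vv {..<n}"
    using d unfolding vv_def n_def inj_on_def by (simp add: nth_eq_iff_index_eq)
  have vlast: "vv (length zs) = v"
    using l len unfolding vv_def by (cases zs) (auto simp: last_conv_nth)
  have conds: "\<forall>i<n. c i < length xs \<and> vv i \<in> xs ! c i \<and> vv (Suc i mod n) \<in> xs ! c i"
  proof (intro allI impI)
    fix i assume i: "i < n"
    show "c i < length xs \<and> vv i \<in> xs ! c i \<and> vv (Suc i mod n) \<in> xs ! c i"
    proof (cases "i < length zs")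
      case True
      then have "Suc i mod n = Suc i" unfolding n_def by simp
      then show ?thesis using cf True unfolding c_def vv_def by auto
    next
      case False
      then have "i = length zs" using i n_def by simp
      then have "Suc i mod n = 0" unfolding n_def by simp
      then show ?thesis using k vlast \<open>i = length zs\<close> unfolding c_def vv_def by auto
    qed
  qed
  have "2 \<le> n" using len n_def by simp
  moreover have "n \<noteq> 2" using len n_def by simp
  ultimately have pre: "2 \<le> n \<and> inj_on vv {..<n} \<and>
       (\<forall>i<n. c i < length xs \<and> vv i \<in> xs ! c i \<and> vv (Suc i mod n) \<in> xs ! c i) \<and>
       (n = 2 \<longrightarrow> c 0 \<noteq> c 1)" using inj conds by blast
  have inst: "(2 \<le> n \<and> inj_on vv {..<n} \<and>
       (\<forall>i<n. c i < length xs \<and> vv i \<in> xs ! c i \<and> vv (Suc i mod n) \<in> xs ! c i) \<and>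
       (n = 2 \<longrightarrow> c 0 \<noteq> c 1)) \<longrightarrow> (\<forall>i<n. c i = c 0)"
    using spec[OF spec[OF spec[OF ac[unfolded acyclic_list_def], of n], of vv], of c] .
  have all: "\<forall>i<n. c i = c 0" using mp[OF inst pre] .
  have "c (length zs) = c 0" using all[rule_format, of "length zs"] n_def by blast
  then have "c 0 = k" unfolding c_def by simp
  then show ?thesis using all unfolding c_def n_def by (metis less_SucI)
qed

lemma choice_lt:
  assumes "\<forall>i<(n::nat). \<exists>x. P i x"
  shows "\<exists>f. \<forall>i<n. P i (f i)"
proof -
  have "\<forall>i. \<exists>x. i < n \<longrightarrow> P i x" using assms by blast
  then obtain f where "\<forall>i. i < n \<longrightarrow> P i (f i)" by (rule choice[THEN exE])
  then show ?thesis by blast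
qed

lemma idx_of:
  assumes "mset xs = H" "D \<in># H"
  obtains k where "k < length xs" "xs ! k = D"
  using assms by (metis in_set_conv_nth set_mset_mset)

lemma card2_eq:
  assumes "card e = 2" "x \<in> e" "y \<in> e" "x \<noteq> y"
  shows "e = {x, y}"
proof -
  obtain a b where "e = {a, b}" "a \<noteq> b" using assms(1) card_2_iff[of e] by blast
  then show ?thesis using assms by auto
qed

lemma block:
  assumes acyc: "acyclic_coloring H"
    and edges: "\<forall>e\<in>#T. card e = 2 \<and> (\<exists>D\<in>#H. e \<subseteq> D)"
    and R: "R \<subseteq> {(x,y). \<exists>C\<in>#T. x\<in>C \<and> y\<in>C}"
    and conn: "(u, v) \<in> R\<^sup>*"
    and K: "K \<in># H" "u \<in> K" "v \<in> K"
  shows "(u, v) \<in> {(x,y). \<exists>e\<in>#T. e \<subseteq> K \<and> x\<in>e \<and> y\<in>e}\<^sup>*"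
proof -
  obtain zs where p: "distinct (u # zs)" "last (u # zs) = v"
    "\<forall>i < length zs. ((u # zs) ! i, zs ! i) \<in> R"
    using path_exists[OF conn] by blast
  have ed: "\<forall>i < length zs. \<exists>e. e \<in># T \<and> (u # zs) ! i \<in> e \<and> zs ! i \<in> e"
    using p(3) R by blast
  show ?thesis
  proof (cases "length zs")
    case 0 then show ?thesis using p by simp
  next
    case (Suc m)
    show ?thesis
    proof (cases m)
      case 0
      then obtain z where zs: "zs = [z]" using Suc by (cases zs) auto
      then have "z = v" using p by simp
      obtain e where e: "e \<in># T" "u \<in> e" "v \<in> e" using ed zs \<open>z = v\<close> by force
      have "u \<noteq> v" using p(1) zs \<open>z = v\<close> by auto
      have "card e = 2" using edges e(1) by blast
      then have "e = {u, v}" by (rule card2_eq[OF _ e(2) e(3) \<open>u \<noteq> v\<close>])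
      then have "e \<subseteq> K" using K by blast
      then have "(u, v) \<in> {(x,y). \<exists>e\<in>#T. e \<subseteq> K \<and> x\<in>e \<and> y\<in>e}"
        using e by blast
      then show ?thesis by (rule r_into_rtrancl)
    next
      case (Suc m')
      then have len: "2 \<le> length zs" using \<open>length zs = Suc m\<close> by simp
      obtain xs where xs: "mset xs = H" using ex_mset by blast
      have acl: "acyclic_list xs" using acyc xs unfolding acyclic_coloring_def by blast
      have "\<forall>i<length zs. \<exists>ce. fst ce < length xs \<and> snd ce \<in># T \<and> snd ce \<subseteq> xs ! fst ce
               \<and> (u # zs) ! i \<in> snd ce \<and> zs ! i \<in> snd ce"
      proof (intro allI impI)
        fix i assume "i < length zs"
        then obtain e where e: "e \<in># T" "(u # zs) ! i \<in> e" "zs ! i \<in> e" using ed by blast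
        then obtain D where "D \<in># H" "e \<subseteq> D" using edges by blast
        then obtain c where "c < length xs" "xs ! c = D" using idx_of xs by metis
        then show "\<exists>ce. fst ce < length xs \<and> snd ce \<in># T \<and> snd ce \<subseteq> xs ! fst ce
               \<and> (u # zs) ! i \<in> snd ce \<and> zs ! i \<in> snd ce"
          using e \<open>e \<subseteq> D\<close> by (intro exI[of _ "(c, e)"]) auto
      qed
      then obtain f where f: "\<forall>i<length zs. fst (f i) < length xs \<and> snd (f i) \<in># T \<and>
          snd (f i) \<subseteq> xs ! fst (f i) \<and> (u # zs) ! i \<in> snd (f i) \<and> zs ! i \<in> snd (f i)"
        by (drule_tac choice_lt) blast
      obtain k where k: "k < length xs" "xs ! k = K" using idx_of xs K(1) by metis
      have cfc: "\<forall>i<length zs. fst (f i) < length xs \<and> (u#zs)!i \<in> xs!(fst (f i)) \<and> zs!i \<in> xs!(fst (f i))"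
        using f by blast
      have kK: "u \<in> xs ! k" "v \<in> xs ! k" using k K by auto
      have fk: "\<forall>i<length zs. fst (f i) = k"
        by (rule cycle_core[OF acl p(1) p(2) len cfc k(1) kK])
      have "\<forall>i<length zs. ((u # zs) ! i, zs ! i) \<in> {(x,y). \<exists>e\<in>#T. e \<subseteq> K \<and> x\<in>e \<and> y\<in>e}"
      proof (intro allI impI)
        fix i assume i: "i < length zs"
        then have "snd (f i) \<subseteq> K" using f fk k by metis
        then show "((u # zs) ! i, zs ! i) \<in> {(x,y). \<exists>e\<in>#T. e \<subseteq> K \<and> x\<in>e \<and> y\<in>e}"
          using f i by blast
      qed
      from path_rtrancl[OF this] show ?thesis using p(2) by simp
    qed
  qed
qed

lemma bridge:
  assumes acyc: "acyclic_coloring T"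
    and edges: "\<forall>f\<in>#T. card f = 2"
    and e: "e \<in># T" "x \<in> e" "y \<in> e" "x \<noteq> y"
  shows "(x, y) \<notin> {(p,q). \<exists>f\<in>#T. f \<noteq> e \<and> p\<in>f \<and> q\<in>f}\<^sup>*"
proof
  assume conn: "(x, y) \<in> {(p,q). \<exists>f\<in>#T. f \<noteq> e \<and> p\<in>f \<and> q\<in>f}\<^sup>*"
  obtain zs where p: "distinct (x # zs)" "last (x # zs) = y"
    "\<forall>i < length zs. ((x # zs) ! i, zs ! i) \<in> {(p,q). \<exists>f\<in>#T. f \<noteq> e \<and> p\<in>f \<and> q\<in>f}"
    using path_exists[OF conn] by blast
  show False
  proof (cases "length zs")
    case 0 then show ?thesis using p e by simp
  next
    case (Suc m)
    show ?thesis
    proof (cases m)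
      case 0
      then obtain z where zs: "zs = [z]" using Suc by (cases zs) auto
      then have "z = y" using p by simp
      obtain f where f: "f \<in># T" "f \<noteq> e" "x \<in> f" "y \<in> f" using p(3) zs \<open>z = y\<close> by force
      have "f = {x, y}" using card2_eq[of f x y] f edges e by simp
      moreover have "e = {x, y}" using card2_eq[of e x y] edges e by simp
      ultimately show False using f by simp
    next
      case (Suc m')
      then have len: "2 \<le> length zs" using \<open>length zs = Suc m\<close> by simp
      obtain xs where xs: "mset xs = T" using ex_mset by blast
      have acl: "acyclic_list xs" using acyc xs unfolding acyclic_coloring_def by blast
      have "\<forall>i<length zs. \<exists>c. c < length xs \<and> xs ! c \<noteq> e
               \<and> (x # zs) ! i \<in> xs ! c \<and> zs ! i \<in> xs ! c"
      proof (intro allI impI)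
        fix i assume "i < length zs"
        then obtain f where f: "f \<in># T" "f \<noteq> e" "(x # zs) ! i \<in> f" "zs ! i \<in> f" using p(3) by blast
        then obtain c where "c < length xs" "xs ! c = f" using idx_of xs by metis
        then show "\<exists>c. c < length xs \<and> xs ! c \<noteq> e \<and> (x # zs) ! i \<in> xs ! c \<and> zs ! i \<in> xs ! c"
          using f by blast
      qed
      then obtain cf where cf: "\<forall>i<length zs. cf i < length xs \<and> xs ! cf i \<noteq> e
               \<and> (x # zs) ! i \<in> xs ! cf i \<and> zs ! i \<in> xs ! cf i"
        by (drule_tac choice_lt) blast
      obtain k where k: "k < length xs" "xs ! k = e" using idx_of xs e(1) by metis
      have cfc: "\<forall>i<length zs. cf i < length xs \<and> (x#zs)!i \<in> xs!(cf i) \<and> zs!i \<in> xs!(cf i)"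
        using cf by blast
      have kK: "x \<in> xs ! k" "y \<in> xs ! k" using k e by auto
      have ck: "\<forall>i<length zs. cf i = k"
        by (rule cycle_core[OF acl p(1) p(2) len cfc k(1) kK])
      have z0: "0 < length zs" using len by linarith
      then have "cf 0 = k" using ck by blast
      then show False using cf[rule_format, OF z0] k by simp
    qed
  qed
qed



definition Ag :: "'a set \<Rightarrow> ('a \<Rightarrow> 'b list) \<Rightarrow> 'b list \<Rightarrow> 'a set" where
  "Ag A W p = {a\<in>A. \<exists>u. u \<noteq> [] \<and> W a = p @ u}"

definition phg :: "('a \<Rightarrow> 'b list) \<Rightarrow> 'b list \<Rightarrow> 'a \<Rightarrow> 'b" where
  "phg W p a = W a ! length p"

definition Tg :: "'a set \<Rightarrow> ('a \<Rightarrow> 'b list) \<Rightarrow> 'b list set" where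
  "Tg A W = {longest_common_prefix (W a) (W b) | a b. a \<in> A \<and> b \<in> A \<and> a \<noteq> b}"

lemma lcp_append: "longest_common_prefix (p @ xs) (p @ ys) = p @ longest_common_prefix xs ys"
  by (induction p) auto

lemma lcp_comm: "longest_common_prefix xs ys = longest_common_prefix ys xs"
  by (induction xs ys rule: longest_common_prefix.induct) auto

locale wsys =
  fixes A :: "'a set" and W :: "'a \<Rightarrow> 'b list"
  assumes finA: "finite A" and ne: "\<forall>a\<in>A. W a \<noteq> []"
    and pf: "\<forall>a\<in>A. \<forall>b\<in>A. prefix (W a) (W b) \<longrightarrow> a = b"
begin

abbreviation "AG \<equiv> Ag A W"
abbreviation "PH \<equiv> phg W"
abbreviation "TG \<equiv> Tg A W"
abbreviation "lcpw a b \<equiv> longest_common_prefix (W a) (W b)"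

lemma Ag_sub: "AG p \<subseteq> A" unfolding Ag_def by auto

lemma Ag_nil: "AG [] = A" using ne unfolding Ag_def by auto

lemma Ag_mono: "AG (p @ q) \<subseteq> AG p" unfolding Ag_def by auto

lemma Ag_len: "a \<in> AG p \<Longrightarrow> length p < length (W a)" unfolding Ag_def by auto

lemma TG_fin: "finite TG"
proof -
  have "TG \<subseteq> (\<lambda>(a,b). lcpw a b) ` (A \<times> A)" unfolding Tg_def by auto
  then show ?thesis using finA finite_subset by blast
qed

lemma phg_Ag:
  assumes "a \<in> AG p"
  obtains x r where "W a = p @ x # r" "PH p a = x"
proof -
  obtain u where "u \<noteq> []" "W a = p @ u" using assms unfolding Ag_def by auto
  then obtain x r where "W a = p @ x # r" by (cases u) auto
  moreover then have "PH p a = x" unfolding phg_def by simp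
  ultimately show ?thesis using that by blast
qed

lemma lcp_level:
  assumes a: "a \<in> A" and b: "b \<in> A" and ab: "a \<noteq> b"
  shows "(a \<in> AG p \<and> b \<in> AG p \<and> PH p a \<noteq> PH p b) \<longleftrightarrow> p = lcpw a b"
proof
  assume h: "a \<in> AG p \<and> b \<in> AG p \<and> PH p a \<noteq> PH p b"
  obtain x r where xr: "W a = p @ x # r" "PH p a = x" using phg_Ag h by blast
  obtain y r' where yr: "W b = p @ y # r'" "PH p b = y" using phg_Ag h by blast
  have "x \<noteq> y" using h xr yr by simp
  then show "p = lcpw a b" using xr yr lcp_append[of p "x # r" "y # r'"] by simp
next
  assume p: "p = lcpw a b"
  obtain u where u: "W a = p @ u" using p longest_common_prefix_prefix1 prefix_def by metis
  obtain u' where u': "W b = p @ u'" using p longest_common_prefix_prefix2 prefix_def by metis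
  have "u \<noteq> []"
  proof
    assume "u = []"
    then have "prefix (W a) (W b)" using u u' by simp
    then show False using pf a b ab by blast
  qed
  have "u' \<noteq> []"
  proof
    assume "u' = []"
    then have "prefix (W b) (W a)" using u u' by simp
    then show False using pf a b ab by blast
  qed
  obtain x r where x: "u = x # r" using \<open>u \<noteq> []\<close> by (cases u) auto
  obtain y r' where y: "u' = y # r'" using \<open>u' \<noteq> []\<close> by (cases u') auto
  have "x \<noteq> y"
  proof
    assume "x = y"
    then have "prefix (p @ [x]) (W a)" "prefix (p @ [x]) (W b)" using u u' x y by auto
    then have "prefix (p @ [x]) p" using p longest_common_prefix_max_prefix by metis
    then show False by (metis prefix_length_le length_append_singleton not_less_eq_eq order_refl)
  qed
  have "a \<in> AG p" "b \<in> AG p" using a b u u' \<open>u \<noteq> []\<close> \<open>u' \<noteq> []\<close> unfolding Ag_def by auto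
  moreover have "PH p a = x" "PH p b = y" using u u' x y unfolding phg_def by auto
  ultimately show "a \<in> AG p \<and> b \<in> AG p \<and> PH p a \<noteq> PH p b" using \<open>x \<noteq> y\<close> by simp
qed

lemma lcp_in_TG: "a \<in> A \<Longrightarrow> b \<in> A \<Longrightarrow> a \<noteq> b \<Longrightarrow> lcpw a b \<in> TG"
  unfolding Tg_def by blast

lemma class_sub:
  assumes c: "c \<in> AG p" and c': "c' \<in> AG p" and eq: "PH p c = PH p c'" and ne: "c \<noteq> c'"
  shows "c \<in> AG (p @ [PH p c])"
proof -
  obtain x r where xr: "W c = p @ x # r" "PH p c = x" using phg_Ag c by blast
  obtain y r' where yr: "W c' = p @ y # r'" "PH p c' = y" using phg_Ag c' by blast
  have "x = y" using xr yr eq by simp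
  have "r \<noteq> []"
  proof
    assume "r = []"
    then have "prefix (W c) (W c')" using xr yr \<open>x = y\<close> by simp
    then show False using pf c c' ne Ag_sub by blast
  qed
  then show ?thesis using xr c Ag_sub unfolding Ag_def by auto
qed

lemma lcp_extends:
  assumes a: "a \<in> AG p" and b: "b \<in> AG p"
  shows "\<exists>r. lcpw a b = p @ r"
proof -
  have "prefix p (W a)" "prefix p (W b)" using a b unfolding Ag_def prefix_def by auto
  then have "prefix p (lcpw a b)" by (rule longest_common_prefix_max_prefix)
  then show ?thesis unfolding prefix_def by blast
qed

end



definition sigmag :: "'a set \<Rightarrow> ('a \<Rightarrow> 'b list) \<Rightarrow> 'a set multiset \<Rightarrow> 'b set multiset" where
  "sigmag A W G = (\<Sum>C\<in>#G. image_mset (\<lambda>p. phg W p ` (C \<inter> Ag A W p)) (mset_set (Tg A W)))"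

definition validg ::
  "'a set \<Rightarrow> 'b set \<Rightarrow> ('a \<Rightarrow> 'b list) \<Rightarrow> 'b set multiset \<Rightarrow> 'a set multiset \<Rightarrow> bool" where
  "validg A B W G' G \<longleftrightarrow>
     (multi_clique_on A G \<and> acyclic_coloring G \<and> mc_connected A G) \<and>
     (\<forall>p\<in>Tg A W. mc_connected (Ag A W p) (induced (Ag A W p) G)) \<and>
     (mc_eq G' (sigmag A W G) \<and> multi_clique_on B G' \<and> acyclic_coloring G' \<and> mc_connected B G')"

lemma in_sum_mset_image: "K \<in># sum_mset (image_mset f M) \<longleftrightarrow> (\<exists>x\<in>#M. K \<in># f x)"
  by (induction M) auto

lemma filter_sum_mset_image:
  "filter_mset P (sum_mset (image_mset f M)) = sum_mset (image_mset (\<lambda>x. filter_mset P (f x)) M)"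
  by (induction M) auto

lemma two_idx:
  assumes "2 \<le> count (mset xs) x"
  shows "\<exists>i j. i < length xs \<and> j < length xs \<and> i \<noteq> j \<and> xs ! i = x \<and> xs ! j = x"
  using assms
proof (induction xs)
  case Nil then show ?case by simp
next
  case (Cons y ys)
  show ?case
  proof (cases "y = x")
    case True
    then have "1 \<le> count (mset ys) x" using Cons.prems by simp
    then have "x \<in> set ys" by (simp add: Suc_le_eq)
    then obtain j where "j < length ys" "ys ! j = x" by (metis in_set_conv_nth)
    then show ?thesis using True by (intro exI[of _ 0] exI[of _ "Suc j"]) simp
  next
    case False
    then have "2 \<le> count (mset ys) x" using Cons.prems by simp
    then obtain i j where "i < length ys" "j < length ys" "i \<noteq> j" "ys ! i = x" "ys ! j = x"
      using Cons.IH by blast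
    then show ?thesis by (intro exI[of _ "Suc i"] exI[of _ "Suc j"]) simp
  qed
qed

lemma two_color_contra:
  assumes ac: "acyclic_coloring H" and xs: "mset xs = H"
    and ij: "i < length xs" "j < length xs" "i \<noteq> j"
    and xy: "x \<noteq> y" "x \<in> xs ! i" "y \<in> xs ! i" "x \<in> xs ! j" "y \<in> xs ! j"
  shows False
proof -
  have acl: "acyclic_list xs" using ac xs unfolding acyclic_coloring_def by blast
  define v where "v = (\<lambda>k::nat. if k = 0 then x else y)"
  define c where "c = (\<lambda>k::nat. if k = 0 then i else j)"
  have pre: "2 \<le> (2::nat) \<and> inj_on v {..<2} \<and>
       (\<forall>k<2. c k < length xs \<and> v k \<in> xs ! c k \<and> v (Suc k mod 2) \<in> xs ! c k) \<and>
       ((2::nat) = 2 \<longrightarrow> c 0 \<noteq> c 1)"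
  proof (intro conjI)
    show "inj_on v {..<2}"
    proof (rule inj_onI)
      fix a b assume ab: "a \<in> {..<(2::nat)}" "b \<in> {..<(2::nat)}" "v a = v b"
      have "a = 0 \<or> a = 1" "b = 0 \<or> b = 1" using ab(1,2) by auto
      then show "a = b" using ab(3) xy(1) unfolding v_def by auto
    qed
    show "\<forall>k<2. c k < length xs \<and> v k \<in> xs ! c k \<and> v (Suc k mod 2) \<in> xs ! c k"
    proof (intro allI impI)
      fix k :: nat assume "k < 2"
      then have "k = 0 \<or> k = 1" by auto
      then show "c k < length xs \<and> v k \<in> xs ! c k \<and> v (Suc k mod 2) \<in> xs ! c k"
        using ij xy unfolding v_def c_def by auto
    qed
    show "2 = 2 \<longrightarrow> c 0 \<noteq> c 1" using ij unfolding c_def by simp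
  qed simp
  have inst: "(2 \<le> (2::nat) \<and> inj_on v {..<2} \<and>
       (\<forall>k<2. c k < length xs \<and> v k \<in> xs ! c k \<and> v (Suc k mod 2) \<in> xs ! c k) \<and>
       ((2::nat) = 2 \<longrightarrow> c 0 \<noteq> c 1)) \<longrightarrow> (\<forall>k<2. c k = c 0)"
    using spec[OF spec[OF spec[OF acl[unfolded acyclic_list_def], of 2], of v], of c] .
  have "\<forall>k<2. c k = c 0" using mp[OF inst pre] .
  then have "c 1 = c 0" by (drule_tac spec[of _ 1]) simp
  then show False using ij unfolding c_def by simp
qed

lemma clique_share_contra:
  assumes ac: "acyclic_coloring H" and K: "K1 \<in># H" "K2 \<in># H" "K1 \<noteq> K2"
    and xy: "x \<noteq> y" "x \<in> K1" "y \<in> K1" "x \<in> K2" "y \<in> K2"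
  shows False
proof -
  obtain xs where xs: "mset xs = H" using ex_mset by blast
  obtain i where i: "i < length xs" "xs ! i = K1" using idx_of xs K(1) by metis
  obtain j where j: "j < length xs" "xs ! j = K2" using idx_of xs K(2) by metis
  have "i \<noteq> j" using i j K(3) by auto
  show False by (rule two_color_contra[OF ac xs i(1) j(1) \<open>i \<noteq> j\<close> xy(1)]) (use i j xy in auto)
qed

lemma count_share_contra:
  assumes ac: "acyclic_coloring H" and K: "2 \<le> count H K"
    and xy: "x \<noteq> y" "x \<in> K" "y \<in> K"
  shows False
proof -
  obtain xs where xs: "mset xs = H" using ex_mset by blast
  obtain i j where ij: "i < length xs" "j < length xs" "i \<noteq> j" "xs ! i = K" "xs ! j = K"
    using two_idx K xs by metis
  show False by (rule two_color_contra[OF ac xs ij(1) ij(2) ij(3) xy(1)]) (use ij xy in auto)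
qed

lemma card_ge2:
  assumes "finite K" "x \<in> K" "y \<in> K" "x \<noteq> y"
  shows "2 \<le> card K"
proof -
  have "card {x, y} \<le> card K" using assms by (intro card_mono) auto
  then show ?thesis using assms(4) by simp
qed

lemma card_img_pair:
  "2 \<le> card (f ` ({a, b} \<inter> S)) \<longleftrightarrow> a \<in> S \<and> b \<in> S \<and> f a \<noteq> f b"
proof
  assume h: "2 \<le> card (f ` ({a, b} \<inter> S))"
  have "f ` ({a, b} \<inter> S) \<subseteq> {f a, f b}" by auto
  show "a \<in> S \<and> b \<in> S \<and> f a \<noteq> f b"
  proof (rule ccontr)
    assume "\<not> (a \<in> S \<and> b \<in> S \<and> f a \<noteq> f b)"
    then have "\<exists>z. f ` ({a, b} \<inter> S) \<subseteq> {z}" by auto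
    then obtain z where "f ` ({a, b} \<inter> S) \<subseteq> {z}" by blast
    then have "card (f ` ({a, b} \<inter> S)) \<le> card {z}" by (intro card_mono) auto
    then show False using h by simp
  qed
next
  assume "a \<in> S \<and> b \<in> S \<and> f a \<noteq> f b"
  then have "f ` ({a, b} \<inter> S) = {f a, f b}" by auto
  then show "2 \<le> card (f ` ({a, b} \<inter> S))" using \<open>a \<in> S \<and> b \<in> S \<and> f a \<noteq> f b\<close> by simp
qed



locale setting = wsys A W for A :: "'a set" and W :: "'a \<Rightarrow> 'b list" +
  fixes B :: "'b set" and G :: "'a set multiset" and G' :: "'b set multiset"
    and T' :: "'b set multiset"
  assumes finB: "finite B"
    and mcA: "multi_clique_on A G"
    and lev: "\<forall>p\<in>Tg A W. mc_connected (Ag A W p) (induced (Ag A W p) G)"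
    and eqG: "mc_eq G' (sigmag A W G)"
    and mcB: "multi_clique_on B G'"
    and acG': "acyclic_coloring G'"
    and st: "spanning_tree B G' T'"
begin

abbreviation "FF C p \<equiv> PH p ` (C \<inter> AG p)"

lemma T'_edge: "e \<in># T' \<Longrightarrow> e \<subseteq> B \<and> card e = 2"
  using st unfolding spanning_tree_def colored_tree_def by blast

lemma T'_count: "count T' e \<le> 1"
  using st unfolding spanning_tree_def colored_tree_def by blast

lemma T'_conn: "mc_connected B T'"
  using st unfolding spanning_tree_def colored_tree_def by blast

lemma T'_acyc: "acyclic_coloring T'"
  using st unfolding spanning_tree_def colored_tree_def by blast

lemma T'_sub: "e \<in># T' \<Longrightarrow> \<exists>D\<in>#G'. e \<subseteq> D"
  using st unfolding spanning_tree_def by blast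

lemma FF_fin: "finite (FF C p)"
proof -
  have "C \<inter> AG p \<subseteq> A" using Ag_sub by blast
  then show ?thesis using finA finite_subset by blast
qed

lemma sigma_mem: "K \<in># sigmag A W G \<longleftrightarrow> (\<exists>C\<in>#G. \<exists>p\<in>TG. K = FF C p)"
  unfolding sigmag_def in_sum_mset_image in_image_mset using TG_fin by auto

lemma count_eq:
  assumes "2 \<le> card K"
  shows "count G' K = count (sigmag A W G) K"
proof -
  have "count (filter_mset (\<lambda>C. 2 \<le> card C) G') K = count (filter_mset (\<lambda>C. 2 \<le> card C) (sigmag A W G)) K"
    using eqG unfolding mc_eq_def by simp
  then show ?thesis using assms by simp
qed

lemma FF_in_G':
  assumes "C \<in># G" "p \<in> TG" "x \<in> FF C p" "y \<in> FF C p" "x \<noteq> y"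
  shows "FF C p \<in># G'"
proof -
  have c2: "2 \<le> card (FF C p)" using card_ge2[OF FF_fin assms(3,4,5)] .
  have "FF C p \<in># sigmag A W G" using sigma_mem assms(1,2) by blast
  then have "0 < count (sigmag A W G) (FF C p)" by simp
  then have "0 < count G' (FF C p)" using count_eq[OF c2] by simp
  then show ?thesis by simp
qed

lemma count_M_ge1:
  assumes "p \<in> TG"
  shows "1 \<le> count (image_mset (\<lambda>p. FF C p) (mset_set TG)) (FF C p)"
proof -
  have "FF C p \<in># image_mset (\<lambda>p. FF C p) (mset_set TG)" using assms TG_fin by simp
  then show ?thesis by (simp add: Suc_le_eq)
qed

lemma two_levels_count:
  assumes C: "C1 \<in># G" "C2 \<in># G" and p: "p1 \<in> TG" "p2 \<in> TG" "p1 \<noteq> p2"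
    and K: "FF C1 p1 = K" "FF C2 p2 = K"
  shows "2 \<le> count (sigmag A W G) K"
proof -
  define M where "M = (\<lambda>C. image_mset (\<lambda>p. FF C p) (mset_set TG))"
  have sg: "sigmag A W G = sum_mset (image_mset M G)" unfolding sigmag_def M_def by simp
  obtain G1 where G1: "G = add_mset C1 G1" using multi_member_split[OF C(1)] by blast
  show ?thesis
  proof (cases "C2 = C1")
    case True
    have "p2 \<in> TG - {p1}" using p by simp
    have r1: "mset_set TG = add_mset p1 (mset_set (TG - {p1}))"
      by (rule mset_set.remove[OF TG_fin p(1)])
    have r2: "mset_set (TG - {p1}) = add_mset p2 (mset_set (TG - {p1} - {p2}))"
      by (rule mset_set.remove) (use TG_fin \<open>p2 \<in> TG - {p1}\<close> in auto)
    have "mset_set TG = add_mset p1 (add_mset p2 (mset_set (TG - {p1} - {p2})))"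
      unfolding r1 r2 ..
    then have "M C1 = add_mset K (add_mset K (image_mset (\<lambda>p. FF C1 p) (mset_set (TG - {p1} - {p2}))))"
      unfolding M_def using K True by simp
    then have "2 \<le> count (M C1) K" by simp
    moreover have "sigmag A W G = M C1 + sum_mset (image_mset M G1)" using sg G1 by simp
    ultimately show ?thesis by simp
  next
    case False
    then have "C2 \<in># G1" using C(2) G1 by simp
    then obtain G2 where G2: "G1 = add_mset C2 G2" using multi_member_split[OF \<open>C2 \<in># G1\<close>] by blast
    have "sigmag A W G = M C1 + (M C2 + sum_mset (image_mset M G2))" using sg G1 G2 by simp
    then have ce: "count (sigmag A W G) K = count (M C1) K + (count (M C2) K + count (sum_mset (image_mset M G2)) K)"
      by simp
    have "1 \<le> count (M C1) K" using count_M_ge1[OF p(1), of C1] K unfolding M_def by simp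
    moreover have "1 \<le> count (M C2) K" using count_M_ge1[OF p(2), of C2] K unfolding M_def by simp
    ultimately show ?thesis unfolding ce by linarith
  qed
qed

lemma level_unique:
  assumes e: "e \<in># T'" and s1: "e \<subseteq> FF C1 p1" and s2: "e \<subseteq> FF C2 p2"
    and C: "C1 \<in># G" "C2 \<in># G" and p: "p1 \<in> TG" "p2 \<in> TG"
  shows "p1 = p2"
proof (rule ccontr)
  assume pne: "p1 \<noteq> p2"
  have "card e = 2" using T'_edge e by blast
  then obtain x y where xy: "e = {x, y}" "x \<noteq> y" using card_2_iff[of e] by blast
  have x1: "x \<in> FF C1 p1" "y \<in> FF C1 p1" using s1 xy by auto
  have x2: "x \<in> FF C2 p2" "y \<in> FF C2 p2" using s2 xy by auto
  have K1: "FF C1 p1 \<in># G'" by (rule FF_in_G'[OF C(1) p(1) x1 xy(2)])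
  have K2: "FF C2 p2 \<in># G'" by (rule FF_in_G'[OF C(2) p(2) x2 xy(2)])
  show False
  proof (cases "FF C1 p1 = FF C2 p2")
    case False
    show False by (rule clique_share_contra[OF acG' K1 K2 False xy(2) x1 x2])
  next
    case True
    have "2 \<le> count (sigmag A W G) (FF C1 p1)"
      by (rule two_levels_count[OF C p pne refl True[symmetric]])
    moreover have c2: "2 \<le> card (FF C1 p1)" by (rule card_ge2[OF FF_fin x1 xy(2)])
    ultimately have "2 \<le> count G' (FF C1 p1)" using count_eq[OF c2] by simp
    then show False by (rule count_share_contra[OF acG' _ xy(2) x1])
  qed
qed

definition Qp :: "'b set \<Rightarrow> 'a \<times> 'a \<times> 'b list \<times> 'a set \<Rightarrow> bool" where
  "Qp e q \<longleftrightarrow> (case q of (a, b, p, C) \<Rightarrow> C \<in># G \<and> p \<in> TG \<and> a \<in> C \<inter> AG p \<and> b \<in> C \<inter> AG p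
      \<and> PH p a \<noteq> PH p b \<and> e = {PH p a, PH p b})"

lemma Qp_ex:
  assumes e: "e \<in># T'"
  shows "\<exists>q. Qp e q"
proof -
  have ce: "card e = 2" using T'_edge[OF e] by blast
  then obtain x y where xy: "e = {x, y}" "x \<noteq> y" using card_2_iff[of e] by blast
  obtain D where D: "D \<in># G'" "e \<subseteq> D" using T'_sub[OF e] by blast
  have "D \<subseteq> B" using mcB D(1) unfolding multi_clique_on_def by blast
  then have fD: "finite D" using finB finite_subset by blast
  have xD: "x \<in> D" "y \<in> D" using D(2) xy(1) by auto
  have c2: "2 \<le> card D" by (rule card_ge2[OF fD xD xy(2)])
  have "0 < count G' D" using D(1) by simp
  then have "0 < count (sigmag A W G) D" using count_eq[OF c2] by simp
  then have "D \<in># sigmag A W G" by simp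
  then have "\<exists>C\<in>#G. \<exists>p\<in>TG. D = FF C p" using sigma_mem by blast
  then obtain C p where Cp: "C \<in># G" "p \<in> TG" "D = FF C p" by blast
  have "x \<in> FF C p" using xD Cp(3) by simp
  then obtain a where a: "a \<in> C \<inter> AG p" "PH p a = x" by blast
  have "y \<in> FF C p" using xD Cp(3) by simp
  then obtain b where b: "b \<in> C \<inter> AG p" "PH p b = y" by blast
  have "Qp e (a, b, p, C)" unfolding Qp_def using Cp(1,2) a b xy by simp
  then show ?thesis by blast
qed

definition chq where "chq e = (SOME q. Qp e q)"
definition pa where "pa e = fst (chq e)"
definition pb where "pb e = fst (snd (chq e))"
definition pl where "pl e = fst (snd (snd (chq e)))"
definition pC where "pC e = snd (snd (snd (chq e)))"
definition pre where "pre e = {pa e, pb e}"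
definition Tt where "Tt = mset_set (pre ` set_mset T')"

lemma pre_props:
  assumes "e \<in># T'"
  shows "pC e \<in># G" "pl e \<in> TG" "pa e \<in> pC e \<inter> AG (pl e)" "pb e \<in> pC e \<inter> AG (pl e)"
    "PH (pl e) (pa e) \<noteq> PH (pl e) (pb e)" "e = {PH (pl e) (pa e), PH (pl e) (pb e)}"
proof -
  have "Qp e (chq e)" unfolding chq_def using someI_ex[OF Qp_ex[OF assms]] .
  then show "pC e \<in># G" "pl e \<in> TG" "pa e \<in> pC e \<inter> AG (pl e)" "pb e \<in> pC e \<inter> AG (pl e)"
    "PH (pl e) (pa e) \<noteq> PH (pl e) (pb e)" "e = {PH (pl e) (pa e), PH (pl e) (pb e)}"
    unfolding Qp_def pa_def pb_def pl_def pC_def by (auto split: prod.splits)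
qed

lemma pa_A: "e \<in># T' \<Longrightarrow> pa e \<in> A" using pre_props(3) Ag_sub by blast
lemma pb_A: "e \<in># T' \<Longrightarrow> pb e \<in> A" using pre_props(4) Ag_sub by blast
lemma pa_pb: "e \<in># T' \<Longrightarrow> pa e \<noteq> pb e" using pre_props(5) by metis

lemma pl_lcp: "e \<in># T' \<Longrightarrow> pl e = lcpw (pa e) (pb e)"
  using lcp_level[OF pa_A pb_A pa_pb] pre_props(3,4,5) by blast

lemma pre_lcp:
  assumes "e \<in># T'" "pre e = {a, b}"
  shows "pl e = lcpw a b"
proof -
  have "(a = pa e \<and> b = pb e) \<or> (a = pb e \<and> b = pa e)"
    using assms(2) unfolding pre_def by (auto simp: doubleton_eq_iff)
  then show ?thesis using pl_lcp[OF assms(1)] lcp_comm by metis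
qed

lemma e_img: "e \<in># T' \<Longrightarrow> e = PH (pl e) ` pre e"
  using pre_props(6) unfolding pre_def by auto

lemma pre_inj: "inj_on pre (set_mset T')"
proof (rule inj_onI)
  fix e1 e2 assume e: "e1 \<in># T'" "e2 \<in># T'" "pre e1 = pre e2"
  have "pl e1 = pl e2" using pre_lcp[OF e(1)] pre_lcp[OF e(2)] e(3) unfolding pre_def by metis
  then show "e1 = e2" using e_img[OF e(1)] e_img[OF e(2)] e(3) by simp
qed

lemma Tt_mem: "E \<in># Tt \<longleftrightarrow> (\<exists>e\<in>#T'. E = pre e)"
  unfolding Tt_def by auto

lemma Tt_count: "count Tt E \<le> 1"
  unfolding Tt_def by (simp add: count_mset_set')

lemma pre_card: "e \<in># T' \<Longrightarrow> card (pre e) = 2 \<and> pre e \<subseteq> A"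
  using pa_pb pa_A pb_A unfolding pre_def by auto

lemma pre_G: "e \<in># T' \<Longrightarrow> pre e \<subseteq> pC e"
  using pre_props(3,4) unfolding pre_def by auto

end



context setting
begin

lemma level_set:
  assumes e: "e \<in># T'"
  shows "{p \<in> TG. 2 \<le> card (FF (pre e) p)} = {pl e}"
proof -
  have "2 \<le> card (FF (pre e) p) \<longleftrightarrow> p = pl e" for p
  proof -
    have "2 \<le> card (FF (pre e) p) \<longleftrightarrow> pa e \<in> AG p \<and> pb e \<in> AG p \<and> PH p (pa e) \<noteq> PH p (pb e)"
      unfolding pre_def by (rule card_img_pair)
    also have "\<dots> \<longleftrightarrow> p = lcpw (pa e) (pb e)"
      by (rule lcp_level[OF pa_A[OF e] pb_A[OF e] pa_pb[OF e]])
    also have "\<dots> \<longleftrightarrow> p = pl e" using pl_lcp[OF e] by simp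
    finally show ?thesis .
  qed
  then show ?thesis using pre_props(2)[OF e] by blast
qed

lemma filter_term:
  assumes e: "e \<in># T'"
  shows "filter_mset (\<lambda>C. 2 \<le> card C) (image_mset (\<lambda>p. FF (pre e) p) (mset_set TG)) = {#e#}"
proof -
  have "filter_mset (\<lambda>C. 2 \<le> card C) (image_mset (\<lambda>p. FF (pre e) p) (mset_set TG))
      = image_mset (\<lambda>p. FF (pre e) p) (filter_mset (\<lambda>p. 2 \<le> card (FF (pre e) p)) (mset_set TG))"
    by (rule image_mset_filter_mset_swap[symmetric])
  also have "filter_mset (\<lambda>p. 2 \<le> card (FF (pre e) p)) (mset_set TG) = mset_set {p \<in> TG. 2 \<le> card (FF (pre e) p)}"
    by (rule filter_mset_mset_set[OF TG_fin])
  also have "\<dots> = {#pl e#}" unfolding level_set[OF e] by simp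
  finally have 1: "filter_mset (\<lambda>C. 2 \<le> card C) (image_mset (\<lambda>p. FF (pre e) p) (mset_set TG)) = {#FF (pre e) (pl e)#}"
    by simp
  have "FF (pre e) (pl e) = PH (pl e) ` pre e"
    using pre_props(3,4)[OF e] unfolding pre_def by auto
  then show ?thesis using 1 e_img[OF e] by simp
qed

lemma mset_set_T': "mset_set (set_mset T') = T'"
proof (rule multiset_eqI)
  fix x
  show "count (mset_set (set_mset T')) x = count T' x"
  proof (cases "x \<in># T'")
    case True
    then have "count T' x = 1" using T'_count[of x] by (simp add: le_antisym Suc_le_eq)
    then show ?thesis using True by simp
  next
    case False
    then show ?thesis by (simp add: count_eq_zero_iff)
  qed
qed

lemma sigma_Tt: "filter_mset (\<lambda>C. 2 \<le> card C) (sigmag A W Tt) = T'"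
proof -
  define g where "g = (\<lambda>E. image_mset (\<lambda>p. FF E p) (mset_set TG))"
  have 1: "filter_mset (\<lambda>C. 2 \<le> card C) (sigmag A W Tt)
      = sum_mset (image_mset (\<lambda>E. filter_mset (\<lambda>C. 2 \<le> card C) (g E)) Tt)"
    unfolding sigmag_def g_def by (rule filter_sum_mset_image)
  have 2: "Tt = image_mset pre (mset_set (set_mset T'))"
    unfolding Tt_def by (rule image_mset_mset_set[OF pre_inj, symmetric])
  have 3: "image_mset (\<lambda>E. filter_mset (\<lambda>C. 2 \<le> card C) (g E)) (image_mset pre (mset_set (set_mset T')))
       = image_mset (\<lambda>e. filter_mset (\<lambda>C. 2 \<le> card C) (g (pre e))) (mset_set (set_mset T'))"
    by (simp add: multiset.map_comp comp_def)
  have 4: "image_mset (\<lambda>e. filter_mset (\<lambda>C. 2 \<le> card C) (g (pre e))) (mset_set (set_mset T'))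
       = image_mset (\<lambda>e. {#e#}) (mset_set (set_mset T'))"
  proof (rule image_mset_cong)
    fix e assume "e \<in># mset_set (set_mset T')"
    then have "e \<in># T'" by simp
    then show "filter_mset (\<lambda>C. 2 \<le> card C) (g (pre e)) = {#e#}"
      unfolding g_def by (rule filter_term)
  qed
  have 5: "sum_mset (image_mset (\<lambda>e. {#e#}) (mset_set (set_mset T'))) = T'"
    using mset_set_T' by simp
  have "sum_mset (image_mset (\<lambda>E. filter_mset (\<lambda>C. 2 \<le> card C) (g E)) Tt) = T'"
    unfolding 2 3 4 5 ..
  then show ?thesis using 1 by simp
qed

lemma mc_eq_Tt: "mc_eq T' (sigmag A W Tt)"
proof -
  have "filter_mset (\<lambda>C. 2 \<le> card C) T' = filter_mset (\<lambda>_. True) T'"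
  proof (rule filter_mset_cong0)
    fix x assume "x \<in># T'"
    then show "2 \<le> card x \<longleftrightarrow> True" using T'_edge by simp
  qed
  then have "filter_mset (\<lambda>C. 2 \<le> card C) T' = T'" by simp
  then show ?thesis unfolding mc_eq_def using sigma_Tt by simp
qed

end



context setting
begin

definition RT :: "'a set \<Rightarrow> ('a \<times> 'a) set" where
  "RT V = {(x, y). x \<in> V \<and> y \<in> V \<and> (\<exists>E\<in>#Tt. x \<in> E \<and> y \<in> E)}"

lemma RT_mono: "V \<subseteq> V' \<Longrightarrow> (RT V)\<^sup>* \<subseteq> (RT V')\<^sup>*"
  by (rule rtrancl_mono) (auto simp: RT_def)

definition SL :: "'b list \<Rightarrow> ('b \<times> 'b) set" where
  "SL p = {(x, y). \<exists>e\<in>#T'. (\<exists>C\<in>#G. e \<subseteq> FF C p) \<and> x \<in> e \<and> y \<in> e}"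

lemma block_level:
  assumes p: "p \<in> TG" and cd: "c \<in> AG p" "d \<in> AG p" and C: "C \<in># G" "c \<in> C" "d \<in> C"
  shows "(PH p c, PH p d) \<in> (SL p)\<^sup>*"
proof (cases "PH p c = PH p d")
  case True then show ?thesis by simp
next
  case False
  have cc: "c \<in> C \<inter> AG p" "d \<in> C \<inter> AG p" using cd C by simp_all
  have xK: "PH p c \<in> FF C p" "PH p d \<in> FF C p" by (rule imageI[OF cc(1)], rule imageI[OF cc(2)])
  have K: "FF C p \<in># G'" by (rule FF_in_G'[OF C(1) p xK False])
  have KB: "FF C p \<subseteq> B" using mcB K unfolding multi_clique_on_def by (rule bspec)
  define R where "R = {(x, y). x \<in> B \<and> y \<in> B \<and> (\<exists>C\<in>#T'. x \<in> C \<and> y \<in> C)}"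
  have xB: "PH p c \<in> B" "PH p d \<in> B" using KB xK by auto
  have conn: "(PH p c, PH p d) \<in> R\<^sup>*"
    using T'_conn xB unfolding mc_connected_def R_def by simp
  have edges: "\<forall>e\<in>#T'. card e = 2 \<and> (\<exists>D\<in>#G'. e \<subseteq> D)"
    using T'_edge T'_sub by blast
  have Rs: "R \<subseteq> {(x,y). \<exists>C\<in>#T'. x\<in>C \<and> y\<in>C}" unfolding R_def by blast
  have "(PH p c, PH p d) \<in> {(x,y). \<exists>e\<in>#T'. e \<subseteq> FF C p \<and> x\<in>e \<and> y\<in>e}\<^sup>*"
    by (rule block[OF acG' edges Rs conn K xK])
  moreover have "{(x,y). \<exists>e\<in>#T'. e \<subseteq> FF C p \<and> x\<in>e \<and> y\<in>e} \<subseteq> SL p"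
    unfolding SL_def using C(1) by blast
  then have "{(x,y). \<exists>e\<in>#T'. e \<subseteq> FF C p \<and> x\<in>e \<and> y\<in>e}\<^sup>* \<subseteq> (SL p)\<^sup>*"
    by (rule rtrancl_mono)
  ultimately show ?thesis by (rule subsetD[rotated])
qed

lemma lift:
  assumes p: "p \<in> TG"
    and cls: "\<forall>c\<in>AG p. \<forall>c'\<in>AG p. PH p c = PH p c' \<longrightarrow> (c, c') \<in> (RT (AG p))\<^sup>*"
    and a: "a \<in> AG p" and b: "b \<in> AG p"
  shows "(a, b) \<in> (RT (AG p))\<^sup>*"
proof -
  define RG where "RG = {(x, y). x \<in> AG p \<and> y \<in> AG p \<and> (\<exists>C\<in>#induced (AG p) G. x \<in> C \<and> y \<in> C)}"
  have "(a, b) \<in> RG\<^sup>*" using lev p a b unfolding mc_connected_def RG_def by blast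
  then have s2: "(PH p a, PH p b) \<in> (SL p)\<^sup>*"
  proof (induction rule: rtrancl_induct)
    case base then show ?case by simp
  next
    case (step y z)
    have yz: "y \<in> AG p" "z \<in> AG p" using step(2) unfolding RG_def by auto
    obtain C' where C': "C' \<in># induced (AG p) G" "y \<in> C'" "z \<in> C'" using step(2) unfolding RG_def by blast
    obtain C where C: "C \<in># G" "C' = C \<inter> AG p" using C'(1) unfolding induced_def by auto
    have "(PH p y, PH p z) \<in> (SL p)\<^sup>*"
      by (rule block_level[OF p yz C(1)]) (use C C' in auto)
    then show ?case using step(3) by (rule rtrancl_trans[rotated])
  qed
  have s3: "(PH p a, X) \<in> (SL p)\<^sup>* \<Longrightarrow> \<forall>c\<in>AG p. PH p c = X \<longrightarrow> (a, c) \<in> (RT (AG p))\<^sup>*" for X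
  proof (induction rule: rtrancl_induct)
    case base
    show ?case
    proof (intro ballI impI)
      fix c assume c: "c \<in> AG p" "PH p c = PH p a"
      then show "(a, c) \<in> (RT (AG p))\<^sup>*" using cls a by metis
    qed
  next
    case (step Y Z)
    show ?case
    proof (intro ballI impI)
      fix c assume c: "c \<in> AG p" "PH p c = Z"
      obtain e C where eC: "e \<in># T'" "C \<in># G" "e \<subseteq> FF C p" "Y \<in> e" "Z \<in> e"
        using step(2) unfolding SL_def by blast
      show "(a, c) \<in> (RT (AG p))\<^sup>*"
      proof (cases "Y = Z")
        case True then show ?thesis using step(3) c by blast
      next
        case False
        have sub: "e \<subseteq> FF (pC e) (pl e)" using pre_props[OF eC(1)] by auto
        have plp: "pl e = p"
          by (rule level_unique[OF eC(1) sub eC(3) pre_props(1)[OF eC(1)] eC(2) pre_props(2)[OF eC(1)] p])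
        have ab: "pa e \<in> AG p" "pb e \<in> AG p" using pre_props(3,4)[OF eC(1)] plp by auto
        have ee: "e = {PH p (pa e), PH p (pb e)}" using pre_props(6)[OF eC(1)] plp by simp
        obtain a' b' where a'b': "a' \<in> AG p" "b' \<in> AG p" "PH p a' = Y" "PH p b' = Z"
          "a' \<in> pre e" "b' \<in> pre e"
        proof (cases "Y = PH p (pa e)")
          case True
          have "Z \<in> {PH p (pa e), PH p (pb e)}" using eC(5) ee by simp
          then have "Z = PH p (pb e)" using True False by blast
          then show ?thesis using that[of "pa e" "pb e"] ab True unfolding pre_def by auto
        next
          case False
          have "Y \<in> {PH p (pa e), PH p (pb e)}" using eC(4) ee by simp
          then have "Y = PH p (pb e)" using False by blast
          have "Z \<in> {PH p (pa e), PH p (pb e)}" using eC(5) ee by simp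
          then have "Z = PH p (pa e)" using \<open>Y = PH p (pb e)\<close> \<open>Y \<noteq> Z\<close> by blast
          note \<open>Y = PH p (pb e)\<close> this
          then show ?thesis using that[of "pb e" "pa e"] ab unfolding pre_def by auto
        qed
        have 1: "(a, a') \<in> (RT (AG p))\<^sup>*" using step(3) a'b' by blast
        have "pre e \<in># Tt" using Tt_mem eC(1) by blast
        then have 2: "(a', b') \<in> RT (AG p)" unfolding RT_def using a'b' by blast
        have "PH p b' = PH p c" using a'b'(4) c(2) by simp
        then have 3: "(b', c) \<in> (RT (AG p))\<^sup>*" using cls a'b'(2) c(1) by blast
        show ?thesis using 1 2 3 by (meson rtrancl_into_rtrancl rtrancl_trans)
      qed
    qed
  qed
  show ?thesis using s3[OF s2] b by blast
qed

definition Mx where "Mx = Max (insert 0 (length ` W ` A))"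

lemma Mx_ge: "a \<in> A \<Longrightarrow> length (W a) \<le> Mx"
  unfolding Mx_def using finA by (intro Max_ge) auto

lemma conn_all: "\<forall>a\<in>AG p. \<forall>b\<in>AG p. (a, b) \<in> (RT (AG p))\<^sup>*"
proof (induction "Mx - length p" arbitrary: p rule: less_induct)
  case less
  show ?case
  proof (intro ballI)
    fix a b assume a: "a \<in> AG p" and b: "b \<in> AG p"
    have aA: "a \<in> A" and bA: "b \<in> A" using a b Ag_sub by auto
    have lp: "length p < Mx" using Ag_len[OF a] Mx_ge[OF aA] by simp
    show "(a, b) \<in> (RT (AG p))\<^sup>*"
    proof (cases "a = b")
      case True then show ?thesis by simp
    next
      case ab: False
      obtain r where r: "lcpw a b = p @ r" using lcp_extends[OF a b] by blast
      show ?thesis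
      proof (cases "r = []")
        case False
        have inq: "a \<in> AG (p @ r)" "b \<in> AG (p @ r)"
          using lcp_level[OF aA bA ab, of "p @ r"] r by auto
        have "0 < length r" using False by simp
        then have "Mx - (length p + length r) < Mx - length p" using lp by (intro diff_less_mono2) auto
        then have "Mx - length (p @ r) < Mx - length p" by simp
        then have "(a, b) \<in> (RT (AG (p @ r)))\<^sup>*" using less inq by blast
        then show ?thesis using RT_mono[OF Ag_mono[of p r]] by blast
      next
        case True
        then have pT: "p \<in> TG" using lcp_in_TG[OF aA bA ab] r by simp
        have cls: "\<forall>c\<in>AG p. \<forall>c'\<in>AG p. PH p c = PH p c' \<longrightarrow> (c, c') \<in> (RT (AG p))\<^sup>*"
        proof (intro ballI impI)
          fix c c' assume c: "c \<in> AG p" "c' \<in> AG p" "PH p c = PH p c'"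
          show "(c, c') \<in> (RT (AG p))\<^sup>*"
          proof (cases "c = c'")
            case True then show ?thesis by simp
          next
            case False
            have i1: "c \<in> AG (p @ [PH p c])" by (rule class_sub[OF c False])
            have i2: "c' \<in> AG (p @ [PH p c])"
              using class_sub[OF c(2) c(1) c(3)[symmetric]] False c(3) by auto
            have "Mx - length (p @ [PH p c]) < Mx - length p" using lp by simp
            then have "(c, c') \<in> (RT (AG (p @ [PH p c])))\<^sup>*" using less i1 i2 by blast
            then show ?thesis using RT_mono[OF Ag_mono[of p "[PH p c]"]] by blast
          qed
        qed
        show ?thesis by (rule lift[OF pT cls a b])
      qed
    qed
  qed
qed

lemma mc_conn_Tt: "mc_connected (AG p) (induced (AG p) Tt)"
proof -
  have "{(x, y). x \<in> AG p \<and> y \<in> AG p \<and> (\<exists>C\<in>#induced (AG p) Tt. x \<in> C \<and> y \<in> C)} = RT (AG p)"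
    unfolding RT_def induced_def by auto
  then show ?thesis unfolding mc_connected_def using conn_all by simp
qed

lemma mc_conn_Tt_A: "mc_connected A Tt"
proof -
  have "{(x, y). x \<in> A \<and> y \<in> A \<and> (\<exists>C\<in>#Tt. x \<in> C \<and> y \<in> C)} = RT (AG [])"
    unfolding RT_def Ag_nil by auto
  then show ?thesis unfolding mc_connected_def using conn_all[of "[]"] Ag_nil by simp
qed

end



lemma mod_helper:
  assumes "j < (n::nat)" "0 < m" "m < n"
  shows "(j + m) mod n \<noteq> j"
proof
  assume h: "(j + m) mod n = j"
  show False
  proof (cases "j + m < n")
    case True
    then have "(j + m) mod n = j + m" by simp
    then show False using h assms by simp
  next
    case False
    then have "(j + m) mod n = j + m - n" using assms by (simp add: mod_if)
    then show False using h assms by simp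
  qed
qed

lemma suc_mod_ne:
  assumes "2 \<le> (n::nat)" "i < n"
  shows "Suc i mod n \<noteq> i"
proof -
  have "(i + 1) mod n \<noteq> i" by (rule mod_helper) (use assms in auto)
  then show ?thesis by simp
qed

lemma edge_distinct:
  assumes n3: "3 \<le> (n::nat)" and inj: "inj_on v {..<n}" and ij: "i < n" "j < n"
    and eq: "{v i, v (Suc i mod n)} = {v j, v (Suc j mod n)}"
  shows "i = j"
proof (rule ccontr)
  assume ne: "i \<noteq> j"
  have si: "Suc i mod n < n" "Suc j mod n < n" using ij by simp_all
  have "v i \<noteq> v j" using inj ij ne unfolding inj_on_def by auto
  then have "v i = v (Suc j mod n) \<and> v (Suc i mod n) = v j" using eq by (auto simp: doubleton_eq_iff)
  then have 1: "i = Suc j mod n" and 2: "Suc i mod n = j"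
    using inj ij si unfolding inj_on_def by auto
  have "(j + 2) mod n = j"
  proof -
    have "(j + 2) mod n = Suc (Suc j mod n) mod n" by (simp add: mod_Suc_eq)
    also have "\<dots> = j" using 1 2 by simp
    finally show ?thesis .
  qed
  moreover have "(j + 2) mod n \<noteq> j" by (rule mod_helper) (use ij n3 in auto)
  ultimately show False by simp
qed

context setting
begin

lemma Tt_edge: "E \<in># Tt \<Longrightarrow> card E = 2 \<and> E \<subseteq> A"
proof -
  assume "E \<in># Tt"
  then obtain e where "e \<in># T'" "E = pre e" using Tt_mem by blast
  then show ?thesis using pre_card by simp
qed

lemma no_cycle:
  assumes n3: "3 \<le> n" and inj: "inj_on v {..<n}"
    and E: "\<forall>i<n. {v i, v (Suc i mod n)} \<in># Tt"
  shows False
proof -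
  define s where "s = (\<lambda>i. Suc i mod n)"
  have s_lt: "i < n \<Longrightarrow> s i < n" for i unfolding s_def using n3 by simp
  have vA: "i < n \<Longrightarrow> v i \<in> A" for i
  proof -
    assume "i < n"
    then have "{v i, v (Suc i mod n)} \<in># Tt" using E by blast
    then have "{v i, v (Suc i mod n)} \<subseteq> A" using Tt_edge by blast
    then show "v i \<in> A" by simp
  qed
  have vne: "i < n \<Longrightarrow> v i \<noteq> v (s i)" for i
  proof
    assume i: "i < n" and h: "v i = v (s i)"
    then have "i = s i" using inj s_lt[OF i] unfolding inj_on_def by blast
    moreover have "s i \<noteq> i" unfolding s_def by (rule suc_mod_ne) (use n3 i in auto)
    ultimately show False by simp
  qed
  have "\<forall>i<n. \<exists>e. e \<in># T' \<and> {v i, v (s i)} = pre e"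
  proof (intro allI impI)
    fix i assume "i < n"
    then have "{v i, v (s i)} \<in># Tt" using E unfolding s_def by blast
    then obtain e where "e \<in># T'" "{v i, v (s i)} = pre e" using Tt_mem by blast
    then show "\<exists>e. e \<in># T' \<and> {v i, v (s i)} = pre e" by blast
  qed
  then obtain ee where ee: "\<forall>i<n. ee i \<in># T' \<and> {v i, v (s i)} = pre (ee i)"
    by (drule_tac choice_lt) blast
  define q where "q = (\<lambda>i. lcpw (v i) (v (s i)))"
  obtain j where j: "j < n" "\<forall>i. i < n \<longrightarrow> length (q j) \<le> length (q i)"
    using ex_has_least_nat[of "\<lambda>i. i < n" 0 "\<lambda>i. length (q i)"] n3 by auto
  define t where "t = q j"
  have pref_k: "prefix t (W (v ((j + k) mod n)))" for k
  proof (induction k)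
    case 0
    then show ?case using j(1) unfolding t_def q_def by (simp add: longest_common_prefix_prefix1)
  next
    case (Suc k)
    define i where "i = (j + k) mod n"
    have i: "i < n" unfolding i_def using j(1) by simp
    have lt: "length t \<le> length (q i)" using j(2) i unfolding t_def by blast
    have "prefix (q i) (W (v i))" unfolding q_def by (rule longest_common_prefix_prefix1)
    then have "prefix t (q i)"
      by (rule prefix_length_prefix[OF Suc.IH[folded i_def] _ lt])
    moreover have "prefix (q i) (W (v (s i)))" unfolding q_def by (rule longest_common_prefix_prefix2)
    ultimately have "prefix t (W (v (s i)))" by (rule prefix_order.trans)
    moreover have "s i = (j + Suc k) mod n" unfolding s_def i_def by (simp add: mod_Suc_eq)
    ultimately show ?case by simp
  qed
  have pref: "i < n \<Longrightarrow> prefix t (W (v i))" for i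
  proof -
    assume i: "i < n"
    have "(j + (n - j + i)) mod n = i" using i j(1) by simp
    then show ?thesis using pref_k[of "n - j + i"] by simp
  qed
  have inAg: "i < n \<Longrightarrow> v i \<in> AG t" for i
  proof -
    assume i: "i < n"
    obtain u where u: "W (v i) = t @ u" using pref[OF i] unfolding prefix_def by blast
    have "u \<noteq> []"
    proof
      assume "u = []"
      then have wt: "W (v i) = t" using u by simp
      have "prefix t (W (v j))" using pref[OF j(1)] .
      then have "v i = v j" using pf vA[OF i] vA[OF j(1)] wt by metis
      then have "W (v j) = q j" using wt t_def by simp
      moreover have "prefix (q j) (W (v (s j)))" unfolding q_def by (rule longest_common_prefix_prefix2)
      ultimately have "v j = v (s j)" using pf vA[OF j(1)] vA[OF s_lt[OF j(1)]] by metis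
      then show False using vne[OF j(1)] by simp
    qed
    then show ?thesis using u vA[OF i] unfolding Ag_def by blast
  qed
  define y where "y = (\<lambda>i. PH t (v i))"
  have img: "i < n \<Longrightarrow> y i \<noteq> y (s i) \<Longrightarrow> ee i = {y i, y (s i)}" for i
  proof -
    assume i: "i < n" and ne: "y i \<noteq> y (s i)"
    have "t = q i" unfolding q_def
      using lcp_level[OF vA[OF i] vA[OF s_lt[OF i]] vne[OF i], of t] inAg[OF i] inAg[OF s_lt[OF i]] ne
      unfolding y_def by blast
    moreover have "pl (ee i) = q i" unfolding q_def
      by (rule pre_lcp) (use ee i in auto)
    ultimately have "pl (ee i) = t" by simp
    then have "ee i = PH t ` pre (ee i)" using e_img ee i by metis
    also have "pre (ee i) = {v i, v (s i)}" using ee i by simp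
    finally show ?thesis unfolding y_def by simp
  qed
  have yj: "y j \<noteq> y (s j)"
    using lcp_level[OF vA[OF j(1)] vA[OF s_lt[OF j(1)]] vne[OF j(1)], of t] unfolding y_def t_def q_def
    by simp
  define e' where "e' = ee j"
  have e'T: "e' \<in># T'" using ee j(1) unfolding e'_def by simp
  have e'eq: "e' = {y j, y (s j)}" using img[OF j(1) yj] unfolding e'_def .
  define Sx where "Sx = {(p, q). \<exists>f\<in>#T'. f \<noteq> e' \<and> p \<in> f \<and> q \<in> f}"
  have walk: "k < n \<Longrightarrow> (y (s j), y ((j + 1 + k) mod n)) \<in> Sx\<^sup>*" for k
  proof (induction k)
    case 0
    then show ?case unfolding s_def by simp
  next
    case (Suc k)
    define i where "i = (j + 1 + k) mod n"
    have i: "i < n" unfolding i_def using j(1) by simp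
    have IH: "(y (s j), y i) \<in> Sx\<^sup>*" using Suc unfolding i_def by simp
    have "(j + (k + 1)) mod n \<noteq> j" by (rule mod_helper) (use j(1) Suc.prems in auto)
    then have ij: "i \<noteq> j" unfolding i_def by (simp add: add.assoc)
    have si: "s i = (j + 1 + Suc k) mod n" unfolding s_def i_def by (simp add: mod_Suc_eq)
    show ?case
    proof (cases "y i = y (s i)")
      case True
      then show ?thesis using IH si by simp
    next
      case False
      have eei: "ee i = {y i, y (s i)}" by (rule img[OF i False])
      have "ee i \<noteq> e'"
      proof
        assume "ee i = e'"
        then have "pre (ee i) = pre (ee j)" unfolding e'_def by simp
        then have "{v i, v (s i)} = {v j, v (s j)}" using ee i j(1) by simp
        then have "i = j" using edge_distinct[OF n3 inj i j(1)] unfolding s_def by blast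
        then show False using ij by simp
      qed
      moreover have "ee i \<in># T'" using ee i by simp
      ultimately have "(y i, y (s i)) \<in> Sx" unfolding Sx_def using eei by blast
      then have "(y (s j), y (s i)) \<in> Sx\<^sup>*" using IH by (rule rtrancl_into_rtrancl[rotated])
      then show ?thesis using si by simp
    qed
  qed
  have "(y (s j), y ((j + 1 + (n - 1)) mod n)) \<in> Sx\<^sup>*" by (rule walk) (use n3 in simp)
  moreover have "(j + 1 + (n - 1)) mod n = j" using n3 j(1) by simp
  ultimately have "(y (s j), y j) \<in> Sx\<^sup>*" by simp
  moreover have "(y (s j), y j) \<notin> Sx\<^sup>*" unfolding Sx_def
    by (rule bridge[OF T'_acyc _ e'T]) (use T'_edge e'eq yj in auto)
  ultimately show False by simp
qed

lemma Tt_distinct: "mset xs = Tt \<Longrightarrow> distinct xs"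
proof -
  assume xs: "mset xs = Tt"
  have "\<forall>a. count (mset xs) a = (if a \<in> set xs then 1 else 0)"
  proof
    fix a
    have le: "count (mset xs) a \<le> 1" using Tt_count[of a] xs by simp
    show "count (mset xs) a = (if a \<in> set xs then 1 else 0)"
    proof (cases "a \<in> set xs")
      case True
      then have "a \<in># mset xs" by simp
      then have "0 < count (mset xs) a" by simp
      then have "count (mset xs) a = 1" using le by linarith
      then show ?thesis using True by simp
    next
      case False
      then have "a \<notin># mset xs" by simp
      then show ?thesis using False by (simp add: not_in_iff)
    qed
  qed
  then show ?thesis using distinct_count_atmost_1 by blast
qed

lemma Tt_acyc: "acyclic_coloring Tt"
  unfolding acyclic_coloring_def acyclic_list_def
proof (rule allI, rule impI, rule allI, rule allI, rule allI, rule impI)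
  fix xs n and v :: "nat \<Rightarrow> 'a" and c
  assume xs: "mset xs = Tt"
  assume h: "2 \<le> n \<and> inj_on v {..<n} \<and>
       (\<forall>i<n. c i < length xs \<and> v i \<in> xs ! c i \<and> v (Suc i mod n) \<in> xs ! c i) \<and>
       (n = 2 \<longrightarrow> c 0 \<noteq> c 1)"
  have inj: "inj_on v {..<n}" using h by blast
  have n2: "2 \<le> n" using h by blast
  have cc: "\<forall>i<n. c i < length xs \<and> v i \<in> xs ! c i \<and> v (Suc i mod n) \<in> xs ! c i" using h by blast
  have inT: "i < n \<Longrightarrow> xs ! c i \<in># Tt" for i
  proof -
    assume "i < n"
    then have "c i < length xs" using cc by blast
    then have "xs ! c i \<in> set xs" by (rule nth_mem)
    then show ?thesis using xs by (metis set_mset_mset)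
  qed
  have edge: "i < n \<Longrightarrow> xs ! c i = {v i, v (Suc i mod n)}" for i
  proof -
    assume i: "i < n"
    have c2: "card (xs ! c i) = 2" using Tt_edge[OF inT[OF i]] by blast
    have ne: "v i \<noteq> v (Suc i mod n)"
    proof
      assume eq: "v i = v (Suc i mod n)"
      have "Suc i mod n < n" using i by simp
      then have "i = Suc i mod n" using inj_onD[OF inj eq] i by simp
      moreover have "Suc i mod n \<noteq> i" by (rule suc_mod_ne[OF n2 i])
      ultimately show False by simp
    qed
    have m: "v i \<in> xs ! c i" "v (Suc i mod n) \<in> xs ! c i" using cc i by blast+
    show ?thesis by (rule card2_eq[OF c2 m ne])
  qed
  show "\<forall>i<n. c i = c 0"
  proof (cases "n = 2")
    case True
    then have c01: "c 0 \<noteq> c 1" using h by blast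
    have "xs ! c 0 = {v 0, v 1}" using edge[of 0] True by simp
    moreover have "xs ! c 1 = {v 1, v 0}" using edge[of 1] True by simp
    ultimately have "xs ! c 0 = xs ! c 1" by auto
    moreover have "c 0 < length xs" using cc True by (metis zero_less_numeral)
    moreover have "c 1 < length xs" using cc True by (metis one_less_numeral_iff semiring_norm(76))
    ultimately have "c 0 = c 1" using nth_eq_iff_index_eq[OF Tt_distinct[OF xs]] by metis
    then show ?thesis using c01 by simp
  next
    case False
    then have "3 \<le> n" using h by simp
    moreover have "\<forall>i<n. {v i, v (Suc i mod n)} \<in># Tt"
    proof (intro allI impI)
      fix i assume i: "i < n"
      show "{v i, v (Suc i mod n)} \<in># Tt" using inT[OF i] edge[OF i] by simp
    qed
    ultimately have False using no_cycle[OF _ inj] by blast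
    then show ?thesis ..
  qed
qed

end



context setting
begin

lemma Tt_spanning: "spanning_tree A G Tt"
  unfolding spanning_tree_def colored_tree_def
proof (intro conjI)
  show "\<forall>C\<in>#Tt. C \<subseteq> A \<and> card C = 2" using Tt_edge by blast
  show "\<forall>C. count Tt C \<le> 1" using Tt_count by blast
  show "mc_connected A Tt" by (rule mc_conn_Tt_A)
  show "acyclic_coloring Tt" by (rule Tt_acyc)
  show "\<forall>e\<in>#Tt. \<exists>C\<in>#G. e \<subseteq> C"
  proof
    fix E assume "E \<in># Tt"
    then obtain e where e: "e \<in># T'" "E = pre e" using Tt_mem by blast
    then show "\<exists>C\<in>#G. E \<subseteq> C" using pre_G[OF e(1)] pre_props(1)[OF e(1)] by blast
  qed
qed

lemma Tt_valid: "validg A B W T' Tt"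
  unfolding validg_def
proof (intro conjI)
  show "multi_clique_on A Tt" unfolding multi_clique_on_def using Tt_edge by blast
  show "acyclic_coloring Tt" by (rule Tt_acyc)
  show "mc_connected A Tt" by (rule mc_conn_Tt_A)
  show "\<forall>p\<in>TG. mc_connected (AG p) (induced (AG p) Tt)" using mc_conn_Tt by blast
  show "mc_eq T' (sigmag A W Tt)" by (rule mc_eq_Tt)
  show "multi_clique_on B T'" unfolding multi_clique_on_def using T'_edge by blast
  show "acyclic_coloring T'" by (rule T'_acyc)
  show "mc_connected B T'" by (rule T'_conn)
qed

end

lemma generic:
  assumes "finite A" "finite B" "\<forall>a\<in>A. W a \<noteq> []"
    "\<forall>a\<in>A. \<forall>b\<in>A. prefix (W a) (W b) \<longrightarrow> a = b"
    and v: "validg A B W G' G" and st: "spanning_tree B G' T'"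
  shows "\<exists>T. spanning_tree A G T \<and> validg A B W T' T"
proof -
  interpret setting A W B G G' T'
    by unfold_locales (use assms in \<open>auto simp: validg_def\<close>)
  show ?thesis using Tt_spanning Tt_valid by blast
qed



lemma occ_mem: "i \<in> occurrences u w \<longleftrightarrow> (\<exists>p s. u = p @ w @ s \<and> length p = i)"
  unfolding occurrences_def by simp

lemma morph_single: "morph \<sigma> [a] = \<sigma> a" unfolding morph_def by simp

lemma rm_inj:
  assumes rm: "return_morphism A B \<sigma> w" and ab: "a \<in> A" "b \<in> A" and eq: "\<sigma> a = \<sigma> b"
  shows "a = b"
proof -
  have inj: "inj_on (morph \<sigma>) (lists A)" using rm unfolding return_morphism_def by blast
  have "morph \<sigma> [a] = morph \<sigma> [b]" using eq by (simp add: morph_single)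
  moreover have "[a] \<in> lists A" "[b] \<in> lists A" using ab by auto
  ultimately have "[a] = [b]" using inj_onD[OF inj] by blast
  then show ?thesis by simp
qed

lemma rm_occ:
  assumes rm: "return_morphism A B \<sigma> w" and a: "a \<in> A"
  shows "occurrences (\<sigma> a @ w) w = {0, length (\<sigma> a)}"
  using rm a unfolding return_morphism_def by blast

lemma rm_ne:
  assumes rm: "return_morphism A B \<sigma> w" and a: "a \<in> A"
  shows "\<sigma> a \<noteq> []"
  using rm a unfolding return_morphism_def by blast

lemma pf_left:
  assumes rm: "return_morphism A B \<sigma> w" and ab: "a \<in> A" "b \<in> A"
    and pre: "prefix (rev (\<sigma> a)) (rev (\<sigma> b))"
  shows "a = b"
proof -
  have "suffix (\<sigma> a) (\<sigma> b)" using pre by (simp add: suffix_to_prefix)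
  then obtain u where u: "\<sigma> b = u @ \<sigma> a" unfolding suffix_def by blast
  show ?thesis
  proof (cases "u = []")
    case True
    then show ?thesis using rm_inj[OF rm ab] u by simp
  next
    case False
    have "0 \<in> occurrences (\<sigma> a @ w) w" using rm_occ[OF rm ab(1)] by simp
    then obtain p r where pr: "\<sigma> a @ w = p @ w @ r" "length p = 0" using occ_mem by blast
    then have "\<sigma> a @ w = w @ r" by simp
    then have "\<sigma> b @ w = u @ w @ r" using u by simp
    then have "length u \<in> occurrences (\<sigma> b @ w) w" using occ_mem by blast
    then have "length u = 0 \<or> length u = length (\<sigma> b)" using rm_occ[OF rm ab(2)] by simp
    then show ?thesis using False u rm_ne[OF rm ab(1)] by auto
  qed
qed

lemma pf_right:
  assumes rm: "return_morphism A B \<sigma> w" and ab: "a \<in> A" "b \<in> A"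
    and pre: "prefix (\<sigma> a @ w) (\<sigma> b @ w)"
  shows "a = b"
proof -
  obtain r where r: "\<sigma> b @ w = \<sigma> a @ w @ r" using pre unfolding prefix_def by auto
  then have "length (\<sigma> a) \<in> occurrences (\<sigma> b @ w) w" using occ_mem by blast
  then have "length (\<sigma> a) = 0 \<or> length (\<sigma> a) = length (\<sigma> b)" using rm_occ[OF rm ab(2)] by simp
  then have len: "length (\<sigma> a) = length (\<sigma> b)" using rm_ne[OF rm ab(1)] by simp
  have "\<sigma> b = \<sigma> a" using r len by (metis append_eq_append_conv)
  then show ?thesis using rm_inj[OF rm ab] by simp
qed

lemma AL_eq: "AL A \<sigma> s = Ag A (\<lambda>a. rev (\<sigma> a)) (rev s)"
proof -
  have "(\<exists>u. u \<noteq> [] \<and> \<sigma> a = u @ s) \<longleftrightarrow> (\<exists>u. u \<noteq> [] \<and> rev (\<sigma> a) = rev s @ u)" for a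
  proof
    assume "\<exists>u. u \<noteq> [] \<and> \<sigma> a = u @ s"
    then obtain u where "u \<noteq> []" "\<sigma> a = u @ s" by blast
    then show "\<exists>u. u \<noteq> [] \<and> rev (\<sigma> a) = rev s @ u" by (intro exI[of _ "rev u"]) simp
  next
    assume "\<exists>u. u \<noteq> [] \<and> rev (\<sigma> a) = rev s @ u"
    then obtain u where "u \<noteq> []" "rev (\<sigma> a) = rev s @ u" by blast
    then have "\<sigma> a = rev u @ s" by (metis rev_append rev_rev_ident)
    then show "\<exists>u. u \<noteq> [] \<and> \<sigma> a = u @ s" using \<open>u \<noteq> []\<close> by (intro exI[of _ "rev u"]) simp
  qed
  then show ?thesis unfolding AL_def Ag_def by simp
qed

lemma TL_eq: "TL A \<sigma> = rev ` Tg A (\<lambda>a. rev (\<sigma> a))"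
  unfolding TL_def Tg_def longest_common_suffix_def by blast

lemma phiL_eq:
  assumes "a \<in> AL A \<sigma> s"
  shows "phiL \<sigma> s a = phg (\<lambda>a. rev (\<sigma> a)) (rev s) a"
proof -
  obtain u where "u \<noteq> []" "\<sigma> a = u @ s" using assms unfolding AL_def by blast
  then have lt: "length s < length (\<sigma> a)" by simp
  have "rev (\<sigma> a) ! length s = \<sigma> a ! (length (\<sigma> a) - Suc (length s))" by (rule rev_nth[OF lt])
  then show ?thesis unfolding phiL_def phg_def by simp
qed

lemma sigmaL_eq: "sigmaL A \<sigma> G = sigmag A (\<lambda>a. rev (\<sigma> a)) G"
proof -
  define W where "W = (\<lambda>a. rev (\<sigma> a))"
  have "image_mset (\<lambda>s. phiL \<sigma> s ` (C \<inter> AL A \<sigma> s)) (mset_set (TL A \<sigma>))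
      = image_mset (\<lambda>p. phg W p ` (C \<inter> Ag A W p)) (mset_set (Tg A W))" for C
  proof -
    have "mset_set (TL A \<sigma>) = image_mset rev (mset_set (Tg A W))"
      unfolding TL_eq W_def by (rule image_mset_mset_set[symmetric]) (simp add: inj_on_def)
    then have "image_mset (\<lambda>s. phiL \<sigma> s ` (C \<inter> AL A \<sigma> s)) (mset_set (TL A \<sigma>))
        = image_mset (\<lambda>p. phiL \<sigma> (rev p) ` (C \<inter> AL A \<sigma> (rev p))) (mset_set (Tg A W))"
      by (simp add: multiset.map_comp comp_def)
    also have "\<dots> = image_mset (\<lambda>p. phg W p ` (C \<inter> Ag A W p)) (mset_set (Tg A W))"
    proof (rule image_mset_cong)
      fix p
      have AL: "AL A \<sigma> (rev p) = Ag A W p" unfolding AL_eq W_def by simp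
      have "phiL \<sigma> (rev p) ` (C \<inter> AL A \<sigma> (rev p)) = phg W p ` (C \<inter> AL A \<sigma> (rev p))"
      proof (rule image_cong[OF refl])
        fix a assume "a \<in> C \<inter> AL A \<sigma> (rev p)"
        then show "phiL \<sigma> (rev p) a = phg W p a" using phiL_eq[of a A \<sigma> "rev p"] unfolding W_def by simp
      qed
      then show "phiL \<sigma> (rev p) ` (C \<inter> AL A \<sigma> (rev p)) = phg W p ` (C \<inter> Ag A W p)"
        using AL by simp
    qed
    finally show ?thesis .
  qed
  then show ?thesis unfolding sigmaL_def sigmag_def W_def by simp
qed

lemma left_valid_eq: "left_valid A B \<sigma> G' G \<longleftrightarrow> validg A B (\<lambda>a. rev (\<sigma> a)) G' G"
proof -
  have "(\<forall>s\<in>TL A \<sigma>. mc_connected (AL A \<sigma> s) (induced (AL A \<sigma> s) G)) \<longleftrightarrow>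
        (\<forall>p\<in>Tg A (\<lambda>a. rev (\<sigma> a)). mc_connected (Ag A (\<lambda>a. rev (\<sigma> a)) p) (induced (Ag A (\<lambda>a. rev (\<sigma> a)) p) G))"
    unfolding TL_eq AL_eq by simp
  then show ?thesis unfolding left_valid_def validg_def sigmaL_eq by simp
qed

lemma right_valid_eq: "right_valid A B \<sigma> w G' G \<longleftrightarrow> validg A B (\<lambda>a. \<sigma> a @ w) G' G"
proof -
  have "AR A \<sigma> w = Ag A (\<lambda>a. \<sigma> a @ w)" unfolding AR_def Ag_def by (rule ext) simp
  moreover have "phiR \<sigma> w = phg (\<lambda>a. \<sigma> a @ w)" unfolding phiR_def phg_def by (intro ext) simp
  moreover have "TR A \<sigma> w = Tg A (\<lambda>a. \<sigma> a @ w)" unfolding TR_def Tg_def by simp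
  ultimately have "sigmaR A \<sigma> w = sigmag A (\<lambda>a. \<sigma> a @ w)"
    unfolding sigmaR_def sigmag_def by (intro ext) simp
  then show ?thesis unfolding right_valid_def validg_def
    using \<open>AR A \<sigma> w = _\<close> \<open>TR A \<sigma> w = _\<close> by simp
qed

theorem mainTheorem11:
  fixes A :: "'a set" and B :: "'b set" and \<sigma> :: "'a \<Rightarrow> 'b list" and w :: "'b list"
    and G :: "'a set multiset" and G' :: "'b set multiset"
  assumes "finite A" and "finite B"
    and "return_morphism A B \<sigma> w"
  shows "(left_valid A B \<sigma> G' G \<longrightarrow>
            (\<forall>T'. spanning_tree B G' T' \<longrightarrow>
               (\<exists>T. spanning_tree A G T \<and> left_valid A B \<sigma> T' T))) \<and>
         (right_valid A B \<sigma> w G' G \<longrightarrow>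
            (\<forall>T'. spanning_tree B G' T' \<longrightarrow>
               (\<exists>T. spanning_tree A G T \<and> right_valid A B \<sigma> w T' T)))"
proof (intro conjI impI allI)
  fix T' assume lv: "left_valid A B \<sigma> G' G" and st: "spanning_tree B G' T'"
  have ne: "\<forall>a\<in>A. rev (\<sigma> a) \<noteq> []" using rm_ne[OF assms(3)] by simp
  have pf: "\<forall>a\<in>A. \<forall>b\<in>A. prefix (rev (\<sigma> a)) (rev (\<sigma> b)) \<longrightarrow> a = b"
    using pf_left[OF assms(3)] by blast
  obtain T where "spanning_tree A G T" "validg A B (\<lambda>a. rev (\<sigma> a)) T' T"
    using generic[OF assms(1,2) ne pf lv[unfolded left_valid_eq] st] by blast
  then show "\<exists>T. spanning_tree A G T \<and> left_valid A B \<sigma> T' T" unfolding left_valid_eq by blast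
next
  fix T' assume rv: "right_valid A B \<sigma> w G' G" and st: "spanning_tree B G' T'"
  have ne: "\<forall>a\<in>A. \<sigma> a @ w \<noteq> []" using rm_ne[OF assms(3)] by simp
  have pf: "\<forall>a\<in>A. \<forall>b\<in>A. prefix (\<sigma> a @ w) (\<sigma> b @ w) \<longrightarrow> a = b"
    using pf_right[OF assms(3)] by blast
  obtain T where "spanning_tree A G T" "validg A B (\<lambda>a. \<sigma> a @ w) T' T"
    using generic[OF assms(1,2) ne pf rv[unfolded right_valid_eq] st] by blast
  then show "\<exists>T. spanning_tree A G T \<and> right_valid A B \<sigma> w T' T" unfolding right_valid_eq by blast
qed


end
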